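(* Let $\mathcal{D}=(\Omega,\mathcal{B})$ be a supersimple $2$-$(n,4,\lambda)$ design such that $(\Omega,\mathcal{C})$ is a regular two-graph, where $\mathcal{C}$ is the set of collinear triples of $\mathcal{D}$. Then $n=6\lambda-2s$, where $s$ is the number of coherent $4$-subsets of $\Omega$ containing a given element of $\mathcal{C}$ (this number being independent of the element). In particular, $n$ is even.
   Context: A $2$-$(n,4,\lambda)$ design $(\Omega,\mathcal{B})$: $n$ points, a multiset of $4$-subsets (lines), every $2$-subset in exactly $\lambda$ lines; supersimple: distinct lines meet in at most two points. Collinear triple: $3$-subset contained in a line. A $2$-$(n,3,\mu)$ design $(\Omega,\mathcal{C})$ is a regular two-graph if every $4$-subset of $\Omega$ contains exactly $0,2$ or $4$ members of $\mathcal{C}$. A subset $X\subseteq\Omega$ is coherent if every $3$-subset of $X$ lies in $\mathcal{C}$. *)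

theory Defs
  imports Main "HOL-Library.Multiset"
begin

definition design_2_4 :: "'a set \<Rightarrow> 'a set multiset \<Rightarrow> nat \<Rightarrow> bool" where
  "design_2_4 \<Omega> B lam \<longleftrightarrow> finite \<Omega> \<and>
     (\<forall>b\<in>#B. b \<subseteq> \<Omega> \<and> card b = 4) \<and>
     (\<forall>P. P \<subseteq> \<Omega> \<and> card P = 2 \<longrightarrow> size (filter_mset (\<lambda>b. P \<subseteq> b) B) = lam)"

text \<open>Supersimple: any two distinct lines (distinct members of the multiset) meet in at most two points.\<close>
definition supersimple :: "'a set multiset \<Rightarrow> bool" where
  "supersimple B \<longleftrightarrow> (\<forall>b\<in>#B. \<forall>c\<in>#(B - {#b#}). card (b \<inter> c) \<le> 2)"

definition collinear_triples :: "'a set \<Rightarrow> 'a set multiset \<Rightarrow> 'a set set" where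
  "collinear_triples \<Omega> B = {T. T \<subseteq> \<Omega> \<and> card T = 3 \<and> (\<exists>b\<in>#B. T \<subseteq> b)}"

definition design_2_3 :: "'a set \<Rightarrow> 'a set set \<Rightarrow> nat \<Rightarrow> bool" where
  "design_2_3 \<Omega> C mu \<longleftrightarrow> finite \<Omega> \<and>
     (\<forall>T\<in>C. T \<subseteq> \<Omega> \<and> card T = 3) \<and>
     (\<forall>P. P \<subseteq> \<Omega> \<and> card P = 2 \<longrightarrow> card {T\<in>C. P \<subseteq> T} = mu)"

definition regular_two_graph :: "'a set \<Rightarrow> 'a set set \<Rightarrow> bool" where
  "regular_two_graph \<Omega> C \<longleftrightarrow> (\<exists>mu. design_2_3 \<Omega> C mu) \<and>
     (\<forall>X. X \<subseteq> \<Omega> \<and> card X = 4 \<longrightarrow> card {T\<in>C. T \<subseteq> X} \<in> {0, 2, 4})"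

definition coherent :: "'a set set \<Rightarrow> 'a set \<Rightarrow> bool" where
  "coherent C X \<longleftrightarrow> (\<forall>T. T \<subseteq> X \<and> card T = 3 \<longrightarrow> T \<in> C)"

end

theory Submission
  imports Defs
begin

lemma size_set_mset_if: "(\<And>x. count M x \<le> 1) \<Longrightarrow> size M = card (set_mset M)"
proof -
  assume h: "\<And>x. count M x \<le> 1"
  have "M = mset_set (set_mset M)"
  proof (rule multiset_eqI)
    fix x show "count M x = count (mset_set (set_mset M)) x"
    proof (cases "x \<in># M")
      case True
      then have c: "count M x > 0" by simp
      have "count (mset_set (set_mset M)) x = 1" using True by simp
      then show ?thesis using h[of x] c by linarith
    qed (auto simp: not_in_iff)
  qed
  then show ?thesis by (metis size_mset_set)
qed

locale sdes =
  fixes \<Omega> :: "'a set" and B :: "'a set multiset" and lam :: nat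
  assumes des: "design_2_4 \<Omega> B lam" and ss: "supersimple B"
begin

abbreviation "C \<equiv> collinear_triples \<Omega> B"

lemma fin: "finite \<Omega>" using des by (simp add: design_2_4_def)
lemma blk: "b \<in># B \<Longrightarrow> b \<subseteq> \<Omega> \<and> card b = 4" using des by (simp add: design_2_4_def)
lemma lamP: "P \<subseteq> \<Omega> \<Longrightarrow> card P = 2 \<Longrightarrow> size (filter_mset (\<lambda>b. P \<subseteq> b) B) = lam"
  using des by (simp add: design_2_4_def)
lemma finB: "b \<in># B \<Longrightarrow> finite b" using blk fin finite_subset by blast
lemma meet: "b \<in># B \<Longrightarrow> c \<in># B \<Longrightarrow> b \<noteq> c \<Longrightarrow> card (b \<inter> c) \<le> 2"
proof -
  assume a: "b \<in># B" "c \<in># B" "b \<noteq> c"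
  have "c \<in># B - {#b#}" using a by (simp add: in_diff_count)
  then show ?thesis using ss a unfolding supersimple_def by blast
qed
lemma cnt: "count B b \<le> 1"
proof (rule ccontr)
  assume "\<not> count B b \<le> 1"
  then have "b \<in># B - {#b#}" by (auto simp: in_diff_count)
  moreover have "b \<in># B" using \<open>\<not> count B b \<le> 1\<close> by (metis count_greater_zero_iff gr0I le0 not_le)
  ultimately have "card (b \<inter> b) \<le> 2" using ss unfolding supersimple_def by blast
  then show False using blk[OF \<open>b \<in># B\<close>] by simp
qed
lemma tri_unique: "T \<subseteq> b \<Longrightarrow> T \<subseteq> c \<Longrightarrow> card T = 3 \<Longrightarrow> b \<in># B \<Longrightarrow> c \<in># B \<Longrightarrow> b = c"
proof (rule ccontr)
  assume a: "T \<subseteq> b" "T \<subseteq> c" "card T = 3" "b \<in># B" "c \<in># B" "b \<noteq> c"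
  have fb: "finite b" using blk[OF a(4)] fin finite_subset by blast
  have "card T \<le> card (b \<inter> c)" using a fb by (intro card_mono) auto
  then show False using meet[OF a(4,5,6)] a(3) by simp
qed

lemma Cmem: "U \<in> C \<longleftrightarrow> U \<subseteq> \<Omega> \<and> card U = 3 \<and> (\<exists>b\<in>#B. U \<subseteq> b)"
  by (simp add: collinear_triples_def)

lemma mu: assumes P: "P \<subseteq> \<Omega>" "card P = 2" shows "card {U\<in>C. P \<subseteq> U} = 2*lam"
proof -
  let ?Bp = "filter_mset (\<lambda>b. P \<subseteq> b) B"
  let ?A = "\<lambda>b. (\<lambda>w. insert w P) ` (b - P)"
  have fP: "finite P" using P fin finite_subset by blast
  have sz: "card (set_mset ?Bp) = lam"
    using lamP[OF P] size_set_mset_if[of ?Bp] cnt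
    by (metis count_filter_mset le_zero_eq nat_le_linear)
  have eq: "{U\<in>C. P \<subseteq> U} = (\<Union>b\<in>set_mset ?Bp. ?A b)"
  proof (intro equalityI subsetI)
    fix U assume "U \<in> {U\<in>C. P \<subseteq> U}"
    then have U: "U \<subseteq> \<Omega>" "card U = 3" "P \<subseteq> U" and "\<exists>b\<in>#B. U \<subseteq> b" by (auto simp: Cmem)
    then obtain b where b: "b \<in># B" "U \<subseteq> b" by blast
    have fU: "finite U" using U fin finite_subset by blast
    have "card (U - P) = 1" using U fP P(2) by (simp add: card_Diff_subset)
    then obtain w where w: "U - P = {w}" by (metis card_1_singletonE)
    have "U = insert w P" using w U(3) by blast
    moreover have "w \<in> b - P" using w b by blast
    ultimately show "U \<in> (\<Union>b\<in>set_mset ?Bp. ?A b)" using b U(3) by auto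
  next
    fix U assume "U \<in> (\<Union>b\<in>set_mset ?Bp. ?A b)"
    then obtain b w where b: "b \<in># B" "P \<subseteq> b" "w \<in> b - P" "U = insert w P" by auto
    have "card U = 3" using b fP P by simp
    then show "U \<in> {U\<in>C. P \<subseteq> U}" using b blk[OF b(1)] by (auto simp: Cmem)
  qed
  have each: "card (?A b) = 2" if "b \<in> set_mset ?Bp" for b
  proof -
    have b: "b \<in># B" "P \<subseteq> b" using that by auto
    have fb: "finite b" using blk[OF b(1)] fin finite_subset by blast
    have "inj_on (\<lambda>w. insert w P) (b - P)" by (rule inj_onI) auto
    then have "card (?A b) = card (b - P)" by (rule card_image)
    also have "\<dots> = 2" using b blk[OF b(1)] P fP by (simp add: card_Diff_subset)
    finally show ?thesis .
  qed
  have disj: "\<forall>i\<in>set_mset ?Bp. \<forall>j\<in>set_mset ?Bp. i \<noteq> j \<longrightarrow> ?A i \<inter> ?A j = {}"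
  proof (intro ballI impI)
    fix i j assume ij: "i \<in> set_mset ?Bp" "j \<in> set_mset ?Bp" "i \<noteq> j"
    show "?A i \<inter> ?A j = {}"
    proof (rule ccontr)
      assume "?A i \<inter> ?A j \<noteq> {}"
      then obtain w w' where ww: "w \<in> i - P" "w' \<in> j - P" "insert w P = insert w' P" by blast
      then have "w = w'" by blast
      then have "insert w P \<subseteq> i" "insert w P \<subseteq> j" using ww ij by auto
      moreover have "card (insert w P) = 3" using ww fP P by simp
      ultimately show False using tri_unique[of "insert w P" i j] ij by auto
    qed
  qed
  have "card {U\<in>C. P \<subseteq> U} = (\<Sum>b\<in>set_mset ?Bp. card (?A b))"
    unfolding eq by (rule card_UN_disjoint) (use disj fin blk finB in auto)
  also have "\<dots> = 2 * lam" using each sz by simp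
  finally show ?thesis .
qed


lemma pair_count:
  assumes d: "x \<noteq> y" "x \<noteq> z" "y \<noteq> z" and T: "T = {x,y,z}" "T \<in> C"
  shows "card {w\<in>\<Omega> - T. {x,y,w} \<in> C} = 2*lam - 1"
proof -
  let ?W = "{w\<in>\<Omega> - T. {x,y,w} \<in> C}"
  have TO: "T \<subseteq> \<Omega>" using T by (simp add: Cmem)
  have P: "{x,y} \<subseteq> \<Omega>" "card {x,y} = 2" using TO T d by auto
  have eq: "{U\<in>C. {x,y} \<subseteq> U} = insert T ((\<lambda>w. {x,y,w}) ` ?W)"
  proof (intro equalityI subsetI)
    fix U assume U0: "U \<in> {U\<in>C. {x,y} \<subseteq> U}"
    then have U: "U \<subseteq> \<Omega>" "card U = 3" "{x,y} \<subseteq> U" "U \<in> C" by (auto simp: Cmem)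
    have "card (U - {x,y}) = 1" using U d by (simp add: card_Diff_subset)
    then obtain w where w: "U - {x,y} = {w}" by (metis card_1_singletonE)
    have Uw: "U = {x,y,w}" using w U(3) by blast
    show "U \<in> insert T ((\<lambda>w. {x,y,w}) ` ?W)"
    proof (cases "w = z")
      case True then show ?thesis using Uw T by auto
    next
      case False
      have "w \<notin> T" using False w T by auto
      moreover have "w \<in> \<Omega>" using w U by auto
      ultimately show ?thesis using Uw U by auto
    qed
  next
    fix U assume "U \<in> insert T ((\<lambda>w. {x,y,w}) ` ?W)"
    then show "U \<in> {U\<in>C. {x,y} \<subseteq> U}" using T by auto
  qed
  have nin: "T \<notin> (\<lambda>w. {x,y,w}) ` ?W"
  proof
    assume "T \<in> (\<lambda>w. {x,y,w}) ` ?W"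
    then obtain w where "w \<notin> T" "T = {x,y,w}" by auto
    then show False by auto
  qed
  have inj: "inj_on (\<lambda>w. {x,y,w}) ?W"
  proof (rule inj_onI)
    fix v w assume "v \<in> ?W" "w \<in> ?W" "{x,y,v} = {x,y,w}"
    then show "v = w" using T by auto
  qed
  have fW: "finite ?W" using fin by auto
  have "2*lam = card {U\<in>C. {x,y} \<subseteq> U}" using mu[OF P] by simp
  also have "\<dots> = Suc (card ?W)" unfolding eq using nin inj fW
    by (simp add: card_image)
  finally show ?thesis by simp
qed

lemma four:
  assumes d: "distinct [x,y,z,w]" and U: "U \<subseteq> {x,y,z,w}" "card U = 3"
  shows "U = {x,y,z} \<or> U = {x,y,w} \<or> U = {x,z,w} \<or> U = {y,z,w}"
proof -
  have "card {x,y,z,w} = 4" using d by simp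
  then have "card ({x,y,z,w} - U) = 1" using U by (simp add: card_Diff_subset finite_subset)
  then obtain v where v: "{x,y,z,w} - U = {v}" by (metis card_1_singletonE)
  then have "U = {x,y,z,w} - {v}" "v \<in> {x,y,z,w}" using U by auto
  then show ?thesis using d by auto
qed

lemma f_val:
  assumes d: "distinct [x,y,z,w]" and T: "T = {x,y,z}" "T \<in> C" and w: "w \<in> \<Omega>"
  shows "card {U\<in>C. U \<subseteq> insert w T} =
     1 + of_bool ({x,y,w} \<in> C) + of_bool ({x,z,w} \<in> C) + of_bool ({y,z,w} \<in> C)"
proof -
  let ?F = "{T, {x,y,w}, {x,z,w}, {y,z,w}}"
  have eq: "{U\<in>C. U \<subseteq> insert w T} = ?F \<inter> {U. U \<in> C}"
  proof (intro equalityI subsetI)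
    fix U assume "U \<in> {U\<in>C. U \<subseteq> insert w T}"
    then have "U \<in> C" "U \<subseteq> {x,y,z,w}" "card U = 3" using T by (auto simp: Cmem)
    then show "U \<in> ?F \<inter> {U. U \<in> C}" using four[OF d] T by blast
  next
    fix U assume "U \<in> ?F \<inter> {U. U \<in> C}"
    then show "U \<in> {U\<in>C. U \<subseteq> insert w T}" using T by auto
  qed
  have ne: "T \<noteq> {x,y,w}" "T \<noteq> {x,z,w}" "T \<noteq> {y,z,w}" "{x,y,w} \<noteq> {x,z,w}"
    "{x,y,w} \<noteq> {y,z,w}" "{x,z,w} \<noteq> {y,z,w}" using d T by (auto simp: insert_eq_iff)
  have "card (?F \<inter> {U. U \<in> C}) = (\<Sum>U\<in>?F. of_bool (U \<in> C))"
    by (subst sum_of_bool_eq) auto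
  also have "\<dots> = 1 + of_bool ({x,y,w} \<in> C) + of_bool ({x,z,w} \<in> C) + of_bool ({y,z,w} \<in> C)"
    using ne T by simp
  finally show ?thesis using eq by simp
qed

lemma per_T:
  assumes rtg: "regular_two_graph \<Omega> C" and TC: "T \<in> C"
  shows "int (card \<Omega>) = 6 * int lam -
     2 * int (card {X. X \<subseteq> \<Omega> \<and> card X = 4 \<and> T \<subseteq> X \<and> coherent C X})"
proof -
  have "card T = 3" "T \<subseteq> \<Omega>" using TC by (auto simp: Cmem)
  then obtain x y z where T: "T = {x,y,z}" and d: "x \<noteq> y" "y \<noteq> z" "x \<noteq> z"
    by (auto simp: card_3_iff)
  define D where "D = \<Omega> - T"
  have fD: "finite D" using fin D_def by auto
  have TO: "T \<subseteq> \<Omega>" by fact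
  have cD: "card D = card \<Omega> - 3" using TO fin \<open>card T = 3\<close> D_def by (simp add: card_Diff_subset finite_subset)
  have n3: "card \<Omega> \<ge> 3" using card_mono[OF fin TO] \<open>card T = 3\<close> by simp
  define S where "S = {w\<in>D. {x,y,w} \<in> C \<and> {x,z,w} \<in> C \<and> {y,z,w} \<in> C}"
  have dw: "distinct [x,y,z,w]" if "w \<in> D" for w using that d T D_def by auto
  have fw: "of_bool ({x,y,w} \<in> C) + of_bool ({x,z,w} \<in> C) + of_bool ({y,z,w} \<in> C)
        = (1 + 2 * of_bool (w \<in> S) :: nat)" if wD: "w \<in> D" for w :: 'a
  proof -
    have wO: "w \<in> \<Omega>" using wD D_def by auto
    have X: "insert w T \<subseteq> \<Omega>" "card (insert w T) = 4"
      using wO TO dw[OF wD] T by auto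
    have "card {U\<in>C. U \<subseteq> insert w T} \<in> {0,2,4}"
      using rtg X unfolding regular_two_graph_def by blast
    then have "(1::nat) + of_bool ({x,y,w} \<in> C) + of_bool ({x,z,w} \<in> C) + of_bool ({y,z,w} \<in> C) \<in> {0,2,4}"
      using f_val[OF dw[OF wD] T TC wO] by simp
    then show ?thesis using wD unfolding S_def
      by (cases "{x,y,w} \<in> C"; cases "{x,z,w} \<in> C"; cases "{y,z,w} \<in> C") auto
  qed
  have c1: "card {w\<in>D. {x,y,w} \<in> C} = 2*lam - 1"
    unfolding D_def by (rule pair_count[OF d(1) d(3) d(2) T TC])
  have c2: "card {w\<in>D. {x,z,w} \<in> C} = 2*lam - 1"
    unfolding D_def by (rule pair_count[OF d(3) d(1) d(2)[symmetric] _ TC]) (use T in auto)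
  have c3: "card {w\<in>D. {y,z,w} \<in> C} = 2*lam - 1"
    unfolding D_def by (rule pair_count[OF d(2) d(1)[symmetric] d(3)[symmetric] _ TC]) (use T in auto)
  have lam1: "lam \<ge> 1"
  proof -
    have "{x,y} \<subseteq> \<Omega>" "card {x,y} = 2" using TO T d by auto
    from mu[OF this] have "card {U\<in>C. {x,y} \<subseteq> U} = 2*lam" .
    moreover have "T \<in> {U\<in>C. {x,y} \<subseteq> U}" using TC T by auto
    moreover have "finite {U\<in>C. {x,y} \<subseteq> U}"
      by (rule finite_subset[of _ "Pow \<Omega>"]) (auto simp: Cmem fin)
    ultimately have "0 < card {U\<in>C. {x,y} \<subseteq> U}" using card_gt_0_iff by blast
    with \<open>card {U\<in>C. {x,y} \<subseteq> U} = 2*lam\<close> show ?thesis by simp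
  qed
  have sumeq: "(\<Sum>w\<in>D. of_bool ({x,y,w} \<in> C) + of_bool ({x,z,w} \<in> C) + of_bool ({y,z,w} \<in> C))
      = (\<Sum>w\<in>D. 1 + 2 * of_bool (w \<in> S) :: nat)"
    using fw by (rule sum.cong[OF refl])
  then have "card (D \<inter> {w. {x,y,w} \<in> C}) + card (D \<inter> {w. {x,z,w} \<in> C}) + card (D \<inter> {w. {y,z,w} \<in> C})
     = card D + 2 * card (D \<inter> {w. w \<in> S})"
  proof -
    have s1: "(\<Sum>w\<in>D. (1::nat) + 2 * of_bool (w \<in> S)) = (\<Sum>w\<in>D. 1) + 2 * (\<Sum>w\<in>D. of_bool (w \<in> S))"
      by (simp only: sum.distrib sum_distrib_left[symmetric])
    have s2: "(\<Sum>w\<in>D. of_bool ({x,y,w} \<in> C) + of_bool ({x,z,w} \<in> C) + of_bool ({y,z,w} \<in> C) :: nat)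
      = (\<Sum>w\<in>D. of_bool ({x,y,w} \<in> C)) + (\<Sum>w\<in>D. of_bool ({x,z,w} \<in> C)) + (\<Sum>w\<in>D. of_bool ({y,z,w} \<in> C))"
      by (simp only: sum.distrib)
    show ?thesis using sumeq s1 s2 fD by (simp only: sum_of_bool_eq[OF fD] of_nat_id card_eq_sum[symmetric])
  qed
  moreover have "D \<inter> {w. w \<in> S} = S" using S_def by auto
  moreover have "D \<inter> {w. {x,y,w} \<in> C} = {w\<in>D. {x,y,w} \<in> C}"
     "D \<inter> {w. {x,z,w} \<in> C} = {w\<in>D. {x,z,w} \<in> C}" "D \<inter> {w. {y,z,w} \<in> C} = {w\<in>D. {y,z,w} \<in> C}" by auto
  ultimately have key: "3 * (2*lam - 1) = card D + 2 * card S" using c1 c2 c3 by simp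
  have coh: "{X. X \<subseteq> \<Omega> \<and> card X = 4 \<and> T \<subseteq> X \<and> coherent C X} = (\<lambda>w. insert w T) ` S"
  proof (intro equalityI subsetI)
    fix X assume "X \<in> {X. X \<subseteq> \<Omega> \<and> card X = 4 \<and> T \<subseteq> X \<and> coherent C X}"
    then have X: "X \<subseteq> \<Omega>" "card X = 4" "T \<subseteq> X" "coherent C X" by auto
    have "card (X - T) = 1" using X \<open>card T = 3\<close> fin by (simp add: card_Diff_subset finite_subset)
    then obtain w where w: "X - T = {w}" by (metis card_1_singletonE)
    have Xw: "X = insert w T" using w X by blast
    have wD: "w \<in> D" using w X D_def by auto
    have coh: "\<And>U. U \<subseteq> X \<Longrightarrow> card U = 3 \<Longrightarrow> U \<in> C" using X(4) unfolding coherent_def by blast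
    have "{x,y,w} \<in> C" using coh[of "{x,y,w}"] dw[OF wD] Xw T by auto
    moreover have "{x,z,w} \<in> C" using coh[of "{x,z,w}"] dw[OF wD] Xw T by auto
    moreover have "{y,z,w} \<in> C" using coh[of "{y,z,w}"] dw[OF wD] Xw T by auto
    ultimately show "X \<in> (\<lambda>w. insert w T) ` S" using Xw wD S_def by auto
  next
    fix X assume "X \<in> (\<lambda>w. insert w T) ` S"
    then obtain w where wS: "w \<in> S" and Xw: "X = insert w T" by auto
    have wD: "w \<in> D" using wS S_def by auto
    have "coherent C X" unfolding coherent_def
    proof (intro allI impI)
      fix U assume "U \<subseteq> X \<and> card U = 3"
      then have U: "U \<subseteq> {x,y,z,w}" "card U = 3" using Xw T by auto
      have abc: "{x,y,w} \<in> C" "{x,z,w} \<in> C" "{y,z,w} \<in> C" using wS unfolding S_def by auto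
      from four[OF dw[OF wD] U] show "U \<in> C" using abc TC T by (elim disjE) simp_all
    qed
    moreover have "X \<subseteq> \<Omega>" "card X = 4" "T \<subseteq> X" using Xw TO wD D_def dw[OF wD] T by auto
    ultimately show "X \<in> {X. X \<subseteq> \<Omega> \<and> card X = 4 \<and> T \<subseteq> X \<and> coherent C X}" by auto
  qed
  have "card ((\<lambda>w. insert w T) ` S) = card S"
    by (rule card_image, rule inj_onI) (auto simp: S_def D_def)
  then show ?thesis using coh key cD n3 lam1 by simp
qed

end

theorem corollary2p4:
  fixes \<Omega> :: "'a set" and B :: "'a set multiset" and lam :: nat
  assumes "design_2_4 \<Omega> B lam"
    and "supersimple B"
    and "lam > 0" and "card \<Omega> \<ge> 2"
    and "regular_two_graph \<Omega> (collinear_triples \<Omega> B)"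
  shows "\<exists>s::nat.
     (\<forall>T\<in>collinear_triples \<Omega> B.
        card {X. X \<subseteq> \<Omega> \<and> card X = 4 \<and> T \<subseteq> X \<and> coherent (collinear_triples \<Omega> B) X} = s)
     \<and> int (card \<Omega>) = 6 * int lam - 2 * int s
     \<and> even (card \<Omega>)"
proof -
  interpret sdes \<Omega> B lam using assms(1,2) by unfold_locales
  let ?c = "\<lambda>T. card {X. X \<subseteq> \<Omega> \<and> card X = 4 \<and> T \<subseteq> X \<and> coherent C X}"
  have "finite \<Omega>" by (rule fin)
  then obtain P where P: "P \<subseteq> \<Omega>" "card P = 2"
    using assms(4) by (meson obtain_subset_with_card_n)
  have "card {U\<in>C. P \<subseteq> U} = 2*lam" by (rule mu[OF P])
  then have "card {U\<in>C. P \<subseteq> U} \<noteq> 0" using assms(3) by simp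
  then have "{U\<in>C. P \<subseteq> U} \<noteq> {}" by (metis card.empty)
  then obtain T0 where T0: "T0 \<in> C" by auto
  have e0: "int (card \<Omega>) = 6 * int lam - 2 * int (?c T0)" by (rule per_T[OF assms(5) T0])
  show ?thesis
  proof (intro exI conjI ballI)
    fix T assume "T \<in> C"
    from per_T[OF assms(5) this] e0 show "?c T = ?c T0" by simp
  next
    show "int (card \<Omega>) = 6 * int lam - 2 * int (?c T0)" by (rule e0)
  next
    have "even (int (card \<Omega>))" using e0 by simp
    then show "even (card \<Omega>)" by simp
  qed
qed

end
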